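(* Let $\nu\in A_2$ and $0<p<\infty$. Then $$\mathbf B^p_\nu(\mathbb R^n)=\bigcap_{\omega\in\{0,\frac13,\frac23\}^n}\mathbf B^p_\nu(\mathbb R^n,\mathcal D^\omega),\qquad \|b\|_{\mathbf B^p_\nu(\mathbb R^n)}\approx\sum_{\omega\in\{0,\frac13,\frac23\}^n}\|b\|_{\mathbf B^p_\nu(\mathbb R^n,\mathcal D^\omega)}.$$
   Context: $A_2$: weights $w$ with $\sup_Q(\frac1{|Q|}\int_Qw)(\frac1{|Q|}\int_Qw^{-1})<\infty$; $w(E)=\int_Ew$. For $\omega\in\{0,\frac13,\frac23\}^n$, $\mathcal D^\omega=\bigcup_{k\in\mathbb Z}\{2^{-k}([0,1)^n+m+(-1)^k\omega):m\in\mathbb Z^n\}$; $\mathcal D=\mathcal D^0$ is the standard dyadic system. $cQ$ is the concentric dilate of a cube $Q$ by factor $c$; $\langle b\rangle_E$ is the average over $E$. $\mathbf B^p_\nu(\mathbb R^n)$ is the set of $b\in L^1_{loc}$ with $\|b\|_{\mathbf B^p_\nu(\mathbb R^n)}:=\big\|\big\{\frac1{\nu(20\sqrt nQ)}\int_{20\sqrt nQ}|b-\langle b\rangle_{20\sqrt nQ}|\big\}_{Q\in\mathcal D}\big\|_{\ell^p}<\infty$; $\mathbf B^p_\nu(\mathbb R^n,\mathcal D^\omega)$ is the set of $b\in L^1_{loc}$ with $\|b\|^p_{\mathbf B^p_\nu(\mathbb R^n,\mathcal D^\omega)}:=\sum_{Q\in\mathcal D^\omega}\big(\frac1{\nu(Q)}\int_Q|b-\langle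 b\rangle_Q|\big)^p<\infty$. *)

theory Defs
  imports "HOL-Analysis.Analysis"
begin

definition hcube :: "real^'n \<Rightarrow> real \<Rightarrow> (real^'n) set" where
  "hcube a l = {x. \<forall>i. a$i \<le> x$i \<and> x$i < a$i + l}"

definition dil_cube :: "real \<Rightarrow> real^'n \<Rightarrow> real \<Rightarrow> (real^'n) set" where
  "dil_cube c a l = hcube (\<chi> i. a$i + l/2 - c*l/2) (c*l)"

definition loc_int :: "(real^'n \<Rightarrow> real) \<Rightarrow> bool" where
  "loc_int f \<longleftrightarrow> (\<forall>K. compact K \<longrightarrow> set_integrable lebesgue K f)"

definition avg :: "(real^'n \<Rightarrow> real) \<Rightarrow> (real^'n) set \<Rightarrow> real" where
  "avg f E = (LINT x:E|lebesgue. f x) / measure lebesgue E"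

definition wmeas :: "(real^'n \<Rightarrow> real) \<Rightarrow> (real^'n) set \<Rightarrow> real" where
  "wmeas w E = (LINT x:E|lebesgue. w x)"

definition A2 :: "(real^'n \<Rightarrow> real) \<Rightarrow> bool" where
  "A2 w \<longleftrightarrow> (\<forall>x. 0 \<le> w x) \<and> (AE x in lebesgue. 0 < w x) \<and>
     loc_int w \<and> loc_int (\<lambda>x. 1 / w x) \<and>
     (\<exists>C. \<forall>a l. 0 < l \<longrightarrow> avg w (hcube a l) * avg (\<lambda>x. 1 / w x) (hcube a l) \<le> C)"

definition osc :: "(real^'n \<Rightarrow> real) \<Rightarrow> (real^'n \<Rightarrow> real) \<Rightarrow> (real^'n) set \<Rightarrow> real" where
  "osc w b E = (LINT x:E|lebesgue. \<bar>b x - avg b E\<bar>) / wmeas w E"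

definition Omega :: "(real^'n) set" where
  "Omega = {\<omega>. \<forall>i. \<omega>$i \<in> {0, 1/3, 2/3}}"

text \<open>Lower corner and side length of the dyadic cube
  2^(-k) ([0,1)^n + m + (-1)^k omega) of the system D^omega.\<close>
definition dcorner :: "real^'n \<Rightarrow> int \<Rightarrow> int^'n \<Rightarrow> real^'n" where
  "dcorner \<omega> k m = (\<chi> i. 2 powr (- real_of_int k) * (real_of_int (m$i) + (-1) powi k * \<omega>$i))"

definition dside :: "int \<Rightarrow> real" where
  "dside k = 2 powr (- real_of_int k)"

definition dcube :: "real^'n \<Rightarrow> int \<Rightarrow> int^'n \<Rightarrow> (real^'n) set" where
  "dcube \<omega> k m = hcube (dcorner \<omega> k m) (dside k)"

text \<open>p-th power of the B^p_nu(R^n) norm: sum over Q in D (= D^0), indexed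
  bijectively by (k,m), of the normalised oscillation over 20 sqrt(n) Q.\<close>
definition besov_pow :: "(real^'n \<Rightarrow> real) \<Rightarrow> real \<Rightarrow> (real^'n \<Rightarrow> real) \<Rightarrow> ennreal" where
  "besov_pow w p b = (\<integral>\<^sup>+ (km :: int \<times> (int^'n)).
      ennreal (osc w b (dil_cube (20 * sqrt (real CARD('n))) (dcorner 0 (fst km) (snd km)) (dside (fst km))) powr p)
      \<partial>count_space UNIV)"

definition Besov :: "(real^'n \<Rightarrow> real) \<Rightarrow> real \<Rightarrow> (real^'n \<Rightarrow> real) set" where
  "Besov w p = {b. loc_int b \<and> besov_pow w p b < \<infinity>}"

definition besov_norm :: "(real^'n \<Rightarrow> real) \<Rightarrow> real \<Rightarrow> (real^'n \<Rightarrow> real) \<Rightarrow> real" where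
  "besov_norm w p b = enn2real (besov_pow w p b) powr (1 / p)"

definition besovD_pow :: "(real^'n \<Rightarrow> real) \<Rightarrow> real \<Rightarrow> real^'n \<Rightarrow> (real^'n \<Rightarrow> real) \<Rightarrow> ennreal" where
  "besovD_pow w p \<omega> b = (\<integral>\<^sup>+ (km :: int \<times> (int^'n)).
      ennreal (osc w b (dcube \<omega> (fst km) (snd km)) powr p) \<partial>count_space UNIV)"

definition BesovD :: "(real^'n \<Rightarrow> real) \<Rightarrow> real \<Rightarrow> real^'n \<Rightarrow> (real^'n \<Rightarrow> real) set" where
  "BesovD w p \<omega> = {b. loc_int b \<and> besovD_pow w p \<omega> b < \<infinity>}"

definition besovD_norm :: "(real^'n \<Rightarrow> real) \<Rightarrow> real \<Rightarrow> real^'n \<Rightarrow> (real^'n \<Rightarrow> real) \<Rightarrow> real" where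
  "besovD_norm w p \<omega> b = enn2real (besovD_pow w p \<omega> b) powr (1 / p)"

end

theory Submission
  imports Defs
begin

lemma hcube_borel: "hcube (a::real^'n) l \<in> sets borel"
  unfolding hcube_def by measurable

lemma hcube_sets[measurable]: "hcube (a::real^'n) l \<in> sets lebesgue"
  using hcube_borel by (metis sets_lborel sets_completionI_sets)

lemma hcube_sub_cbox: "hcube (a::real^'n) l \<subseteq> cbox a (\<chi> i. a$i + l)"
  proof
  fix x assume "x \<in> hcube a l"
  then have "\<forall>i. a$i \<le> x$i \<and> x$i < a$i + l" by (simp add: hcube_def)
  then show "x \<in> cbox a (\<chi> i. a$i + l)" by (simp add: mem_box_cart less_imp_le)
qed

lemma box_sub_hcube: "box (a::real^'n) (\<chi> i. a$i + l) \<subseteq> hcube a l"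
  by (auto simp: hcube_def mem_box_cart less_imp_le)

lemma hcube_measure:
  assumes "0 < l"
  shows "measure lebesgue (hcube (a::real^'n) l) = l ^ CARD('n)"
proof -
  have ne: "cbox a (\<chi> i. a$i + l) \<noteq> {}" using assms proof -
    have "a \<in> cbox a (\<chi> i. a$i + l)" using assms by (simp add: mem_box_cart)
    then show ?thesis by blast
  qed
  have c: "measure lborel (cbox a (\<chi> i. a$i + l)) = l ^ CARD('n)"
    using content_cbox_cart[OF ne] by simp
  have b: "measure lborel (box a (\<chi> i. a$i + l)) = l ^ CARD('n)"
    using c by (simp add: measure_lborel_box_eq measure_lborel_cbox_eq)
  have "measure lborel (hcube a l) \<le> measure lborel (cbox a (\<chi> i. a$i + l))"
    by (intro measure_mono_fmeasurable hcube_sub_cbox) (auto simp: hcube_borel)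
  moreover have "measure lborel (box a (\<chi> i. a$i + l)) \<le> measure lborel (hcube a l)"
  proof (intro measure_mono_fmeasurable box_sub_hcube)
    have "emeasure lborel (hcube a l) \<le> emeasure lborel (cbox a (\<chi> i. a$i + l))"
      by (intro emeasure_mono hcube_sub_cbox) auto
    then show "hcube a l \<in> fmeasurable lborel"
      using emeasure_lborel_cbox_finite[of a "\<chi> i. a$i + l"]
      by (auto simp: fmeasurable_def hcube_borel intro: le_less_trans)
  qed simp
  ultimately have "measure lborel (hcube a l) = l ^ CARD('n)" using b c by linarith
  then show ?thesis using hcube_borel[of a l] by (simp add: measure_completion sets_lborel)
qed

lemma sint_const:
  assumes "A \<in> sets M" "emeasure M A < \<infinity>"
  shows "set_integrable M A (\<lambda>_. c::real)"
  using assms unfolding set_integrable_def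
  using has_bochner_integral_indicator[OF assms(1), of c] assms(2)
  by (auto intro: integrable.intros)

lemma sint_subset_mono:
  fixes f :: "'a \<Rightarrow> real"
  assumes "A \<in> sets M" "B \<in> sets M" "A \<subseteq> B" "set_integrable M B f" "\<And>x. x \<in> B \<Longrightarrow> 0 \<le> f x"
  shows "(LINT x:A|M. f x) \<le> (LINT x:B|M. f x)"
proof -
  have "set_integrable M A f" using assms set_integrable_subset by blast
  then show ?thesis using assms unfolding set_lebesgue_integral_def set_integrable_def
    by (intro integral_mono) (auto split: split_indicator)
qed

lemma sint_abs:
  fixes f :: "'a \<Rightarrow> real"
  shows "\<bar>LINT x:A|M. f x\<bar> \<le> (LINT x:A|M. \<bar>f x\<bar>)"
proof -
  have "\<bar>LINT x:A|M. f x\<bar> \<le> (\<integral>x. \<bar>indicator A x *\<^sub>R f x\<bar> \<partial>M)"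
    unfolding set_lebesgue_integral_def by (rule integral_abs_bound)
  also have "\<dots> = (LINT x:A|M. \<bar>f x\<bar>)"
    unfolding set_lebesgue_integral_def by (intro Bochner_Integration.integral_cong) (auto split: split_indicator)
  finally show ?thesis .
qed

lemma osc_core:
  fixes b :: "'a \<Rightarrow> real"
  assumes Q: "Q \<in> sets M" "emeasure M Q < \<infinity>" "0 < measure M Q"
    and P: "P \<in> sets M" "emeasure M P < \<infinity>" and QP: "Q \<subseteq> P"
    and ib: "set_integrable M P b"
  shows "(LINT x:Q|M. \<bar>b x - (LINT x:Q|M. b x) / measure M Q\<bar>) \<le> 2 * (LINT x:P|M. \<bar>b x - c\<bar>)"
proof -
  define mQ where "mQ = measure M Q"
  define aQ where "aQ = (LINT x:Q|M. b x) / mQ"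
  have iQ: "set_integrable M Q b" using set_integrable_subset[OF ib Q(1) QP] .
  have cQ: "set_integrable M Q (\<lambda>_. d)" for d :: real using sint_const[OF Q(1,2)] .
  have cP: "set_integrable M P (\<lambda>_. d)" for d :: real using sint_const[OF P(1,2)] .
  have ibc: "set_integrable M Q (\<lambda>x. b x - c)" using iQ cQ by (rule set_integral_diff)
  have ibcP: "set_integrable M P (\<lambda>x. \<bar>b x - c\<bar>)"
    using set_integral_diff(1)[OF ib cP] by (rule set_integrable_abs)
  have ibcQ: "set_integrable M Q (\<lambda>x. \<bar>b x - c\<bar>)" using ibc by (rule set_integrable_abs)
  have intc: "(LINT x:Q|M. d) = mQ * d" for d :: real using set_integral_const[OF Q(1), of d] Q(2) unfolding mQ_def by (simp add: less_top)
  have "(LINT x:Q|M. b x - c) = (LINT x:Q|M. b x) - mQ * c"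
    using set_integral_diff(2)[OF iQ cQ] intc by simp
  then have "aQ - c = (LINT x:Q|M. b x - c) / mQ"
    using Q(3) unfolding aQ_def mQ_def by (simp add: field_simps)
  then have "\<bar>aQ - c\<bar> * mQ \<le> (LINT x:Q|M. \<bar>b x - c\<bar>)"
    using sint_abs[where f="\<lambda>x. b x - c" and A=Q and M=M] Q(3) unfolding mQ_def
    by (simp add: abs_div)
  have "(LINT x:Q|M. \<bar>b x - aQ\<bar>) \<le> (LINT x:Q|M. \<bar>b x - c\<bar> + \<bar>aQ - c\<bar>)"
    using ibcQ cQ set_integrable_abs[OF set_integral_diff(1)[OF iQ cQ]]
    by (intro set_integral_mono) auto
  also have "\<dots> = (LINT x:Q|M. \<bar>b x - c\<bar>) + mQ * \<bar>aQ - c\<bar>"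
    using set_integral_add(2)[OF ibcQ cQ] intc by simp
  also have "\<dots> \<le> 2 * (LINT x:Q|M. \<bar>b x - c\<bar>)"
    using \<open>\<bar>aQ - c\<bar> * mQ \<le> _\<close> by (simp add: mult.commute)
  also have "\<dots> \<le> 2 * (LINT x:P|M. \<bar>b x - c\<bar>)"
    using sint_subset_mono[OF Q(1) P(1) QP ibcP] by simp
  finally show ?thesis unfolding aQ_def mQ_def .
qed

lemma hcube_emeasure_finite: "emeasure lebesgue (hcube (a::real^'n) l) < \<infinity>"
proof -
  have "emeasure lebesgue (hcube a l) \<le> emeasure lebesgue (cbox a (\<chi> i. a$i + l))"
    by (intro emeasure_mono hcube_sub_cbox) auto
  also have "\<dots> < \<infinity>" using lmeasurable_cbox[of a "\<chi> i. a$i + l"]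
    unfolding fmeasurable_def by blast
  finally show ?thesis .
qed

lemma loc_int_hcube:
  assumes "loc_int f"
  shows "set_integrable lebesgue (hcube (a::real^'n) l) f"
proof -
  have "set_integrable lebesgue (cbox a (\<chi> i. a$i + l)) f"
    using assms compact_cbox unfolding loc_int_def by blast
  then show ?thesis using set_integrable_subset[OF _ hcube_sets hcube_sub_cbox] by blast
qed

lemma doubling:
  fixes w :: "real^'n \<Rightarrow> real"
  assumes A: "A2 w" and C: "\<forall>a l. 0 < l \<longrightarrow> avg w (hcube a l) * avg (\<lambda>x. 1 / w x) (hcube a l) \<le> C"
    and l: "0 < l" "0 < l'" and QP: "hcube a l \<subseteq> hcube a' l'"
  shows "0 < wmeas w (hcube a l)"
    "wmeas w (hcube a' l') \<le> C * (l' ^ CARD('n) / l ^ CARD('n))^2 * wmeas w (hcube a l)"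
proof -
  define Q where "Q = hcube a l"
  define P where "P = hcube a' l'"
  define mQ where "mQ = l ^ CARD('n)"
  define mP where "mP = l' ^ CARD('n)"
  have mQ: "measure lebesgue Q = mQ" "0 < mQ" using hcube_measure l unfolding Q_def mQ_def by auto
  have mP: "measure lebesgue P = mP" "0 < mP" using hcube_measure l unfolding P_def mP_def by auto
  have w0: "\<And>x. 0 \<le> w x" and wpos: "AE x in lebesgue. 0 < w x"
    and lw: "loc_int w" and lw': "loc_int (\<lambda>x. 1 / w x)" using A unfolding A2_def by auto
  have iwQ: "set_integrable lebesgue Q w" and iwP: "set_integrable lebesgue P w"
    and iwQ': "set_integrable lebesgue Q (\<lambda>x. 1 / w x)" and iwP': "set_integrable lebesgue P (\<lambda>x. 1 / w x)"
    using loc_int_hcube lw lw' unfolding Q_def P_def by blast+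
  have Qs: "Q \<in> sets lebesgue" "emeasure lebesgue Q < \<infinity>" and Ps: "P \<in> sets lebesgue" "emeasure lebesgue P < \<infinity>"
    unfolding Q_def P_def using hcube_emeasure_finite by auto
  define nQ where "nQ = wmeas w Q"
  define nP where "nP = wmeas w P"
  define sP where "sP = (LINT x:P|lebesgue. 1 / w x)"
  define sQ where "sQ = (LINT x:Q|lebesgue. 1 / w x)"
  have nQ0: "0 \<le> nQ" unfolding nQ_def wmeas_def set_lebesgue_integral_def
    using w0 by (intro Bochner_Integration.integral_nonneg) (auto split: split_indicator)
  have nP0: "0 \<le> nP" unfolding nP_def wmeas_def set_lebesgue_integral_def
    using w0 by (intro Bochner_Integration.integral_nonneg) (auto split: split_indicator)
  have sP0: "0 \<le> sP" unfolding sP_def set_lebesgue_integral_def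
    using w0 by (intro Bochner_Integration.integral_nonneg) (auto split: split_indicator)
  have sQP: "sQ \<le> sP" unfolding sQ_def sP_def using QP w0 unfolding Q_def P_def
    by (intro sint_subset_mono iwP'[unfolded P_def]) auto
  have nQpos: "0 < nQ"
  proof (rule ccontr)
    assume "\<not> 0 < nQ"
    then have "nQ = 0" using nQ0 by simp
    then have "AE x in lebesgue. indicator Q x *\<^sub>R w x = 0"
      using iwQ w0 unfolding nQ_def wmeas_def set_lebesgue_integral_def set_integrable_def
      by (subst integral_nonneg_eq_0_iff_AE[symmetric]) auto
    then have "AE x in lebesgue. x \<notin> Q" using wpos by eventually_elim (auto split: split_indicator)
    then have "emeasure lebesgue Q = 0" using Qs by (simp add: AE_iff_measurable[OF _ refl])
    then show False using mQ by (simp add: measure_def)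
  qed
  have key: "2 * mQ \<le> t * nQ + sQ / t" if t: "0 < t" for t
  proof -
    have "(LINT x:Q|lebesgue. 2) \<le> (LINT x:Q|lebesgue. t * w x + (1 / w x) / t)"
    proof (rule set_integral_mono_AE)
      show "set_integrable lebesgue Q (\<lambda>x. 2::real)" using sint_const Qs by blast
      show "set_integrable lebesgue Q (\<lambda>x. t * w x + (1 / w x) / t)"
        by (intro set_integral_add(1) set_integrable_mult_right set_integrable_divide iwQ iwQ')
      show "AE x\<in>Q in lebesgue. 2 \<le> t * w x + 1 / w x / t"
        using wpos
      proof eventually_elim
        case (elim x)
        have "0 \<le> (t * w x - 1)^2 / (t * w x)" using elim t by simp
        then have "0 \<le> t * w x - 2 + 1 / (t * w x)" using elim t
          by (simp add: power2_eq_square field_simps)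
        then show ?case by (simp add: field_simps)
      qed
    qed
    also have "\<dots> = (LINT x:Q|lebesgue. t * w x) + (LINT x:Q|lebesgue. (1 / w x) / t)"
      by (intro set_integral_add(2) set_integrable_mult_right set_integrable_divide iwQ iwQ')
    also have "\<dots> = t * nQ + sQ / t"
      unfolding nQ_def sQ_def wmeas_def by (simp only: set_integral_mult_right set_integral_divide_zero)
    finally show ?thesis using set_integral_const[OF Qs(1), of "2::real"] Qs(2) mQ by (simp add: less_top)
  qed
  have "2 * mQ \<le> (mQ / nQ) * nQ + sQ / (mQ / nQ)" using key[of "mQ / nQ"] mQ nQpos by simp
  moreover have "(mQ / nQ) * nQ = mQ" using nQpos by simp
  moreover have "sQ / (mQ / nQ) = sQ * nQ / mQ" by simp
  ultimately have "mQ \<le> sQ * nQ / mQ" by simp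
  then have "mQ * mQ \<le> sQ * nQ" using mQ(2) by (simp add: pos_le_divide_eq)
  also have "\<dots> \<le> sP * nQ" using sQP nQ0 by (rule mult_right_mono)
  finally have h1: "mQ * mQ * nP \<le> sP * nQ * nP" using nP0 by (rule mult_right_mono)
  have "avg w P * avg (\<lambda>x. 1 / w x) P \<le> C" using C l(2) unfolding P_def by blast
  then have "nP * sP / (mP * mP) \<le> C" using mP unfolding avg_def nP_def sP_def wmeas_def
    by simp
  then have "nP * sP \<le> C * (mP * mP)" using mP(2) by (simp add: pos_divide_le_eq)
  then have "nP * sP * nQ \<le> C * (mP * mP) * nQ" using nQ0 by (rule mult_right_mono)
  then have "mQ * mQ * nP \<le> C * (mP * mP) * nQ" using h1 by (simp add: mult_ac)
  then have "nP \<le> C * (mP * mP) * nQ / (mQ * mQ)" using mQ(2) by (simp add: pos_le_divide_eq mult_ac)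
  also have "\<dots> = C * (mP / mQ)^2 * nQ" by (simp add: power2_eq_square)
  finally show "wmeas w (hcube a' l') \<le> C * (l' ^ CARD('n) / l ^ CARD('n))^2 * wmeas w (hcube a l)"
    unfolding nP_def nQ_def P_def Q_def mP_def mQ_def .
  show "0 < wmeas w (hcube a l)" using nQpos unfolding nQ_def Q_def .
qed

lemma one_third:
  fixes y lam \<sigma> :: real
  assumes "lam \<le> 1/3" "\<sigma> = 1 \<or> \<sigma> = -1"
  shows "\<exists>w\<in>{0, 1/3, 2/3}. \<exists>m::int. m + \<sigma> * w \<le> y \<and> y + lam \<le> m + \<sigma> * w + 1"
proof -
  define g where "g = \<lfloor>3 * y\<rfloor>"
  define q where "q = g div 3"
  define r where "r = g mod 3"
  have g: "g = 3 * q + r" unfolding q_def r_def by simp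
  have r: "r = 0 \<or> r = 1 \<or> r = 2" unfolding r_def by auto
  have e1: "real_of_int g / 3 \<le> y" unfolding g_def by linarith
  have e2: "y < real_of_int g / 3 + 1/3" unfolding g_def by linarith
  have main: "\<exists>w\<in>{0, 1/3, 2/3}. \<exists>m::int. m + \<sigma> * w = real_of_int g / 3"
  proof (cases "\<sigma> = 1")
    case True
    show ?thesis
      by (rule bexI[where x="real_of_int r / 3"], rule exI[where x=q]) (use r g True in auto)
  next
    case False
    then have s: "\<sigma> = -1" using assms by auto
    consider "r = 0" | "r = 1" | "r = 2" using r by blast
    then show ?thesis
    proof cases
      case 1 then show ?thesis using g s by (intro bexI[where x=0] exI[where x=q]) auto
    next
      case 2 then show ?thesis using g s by (intro bexI[where x="2/3"] exI[where x="q+1"]) auto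
    next
      case 3 then show ?thesis using g s by (intro bexI[where x="1/3"] exI[where x="q+1"]) auto
    qed
  qed
  then obtain w m where w: "w \<in> {0, 1/3, 2/3}" and m: "real_of_int m + \<sigma> * w = real_of_int g / 3" by blast
  have "real_of_int m + \<sigma> * w \<le> y \<and> y + lam \<le> real_of_int m + \<sigma> * w + 1"
    using e1 e2 assms(1) m by linarith
  then show ?thesis using w by blast
qed

lemma int_interval_cong:
  fixes u v N :: int and x :: real
  assumes "x \<le> u" "u < x + N" "x \<le> v" "v < x + N" "u mod N = v mod N" "0 < N"
  shows "u = v"
proof -
  have "N dvd (u - v)" using assms(5) by (simp add: mod_eq_dvd_iff)
  then obtain t where t: "u - v = N * t" by blast
  have "\<bar>u - v\<bar> < N" using assms(1-4) by linarith
  then have "\<bar>N * t\<bar> < N" using t by simp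
  then have "t = 0" using assms(6)
    by (metis abs_mult abs_of_pos less_1_mult linorder_not_less mult.right_neutral
        mult_less_cancel_left_pos zabs_less_one_iff zero_less_abs_iff)
  then show ?thesis using t by simp
qed

lemma sign_pm: "(-1::real) powi k = 1 \<or> (-1::real) powi k = -1"
  by (simp add: power_int_minus_left)

lemma dside_pos: "0 < dside k" unfolding dside_def by simp

lemma dcorner0: "dcorner 0 k m $ i = dside k * real_of_int (m$i)"
  unfolding dcorner_def dside_def by simp

lemma dil_dyadic: "dil_cube c (dcorner 0 k m) (dside k)
   = hcube (\<chi> i. dside k * real_of_int (m$i) + dside k / 2 - c * dside k / 2) (c * dside k)"
  unfolding dil_cube_def by (simp add: dcorner0)

lemma coord_B:
  fixes s c t x :: real and m f :: int
  assumes "0 < s" "3 \<le> c" "f \<le> t" "t < f + 1" "s * (m + t) \<le> x" "x < s * (m + t) + s"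
  shows "s * (m + f) + s / 2 - c * s / 2 \<le> x \<and> x < s * (m + f) + s / 2 - c * s / 2 + c * s"
proof -
  have "s * f \<le> s * t" using assms by simp
  moreover have "s * t < s * f + s" using assms mult_strict_left_mono[of t "f+1" s] by (simp add: algebra_simps)
  moreover have "3 * s \<le> c * s" using assms by simp
  moreover have "s * (m + t) = s * m + s * t" "s * (m + f) = s * m + s * f" by (simp_all add: algebra_simps)
  ultimately show ?thesis using assms by linarith
qed

lemma dcube_in_dil:
  fixes \<omega> :: "real^'n"
  assumes "3 \<le> c"
  shows "dcube \<omega> k m \<subseteq> dil_cube c (dcorner 0 k (\<chi> i. m$i + \<lfloor>(-1) powi k * \<omega>$i\<rfloor>)) (dside k)"
proof
  fix x assume "x \<in> dcube \<omega> k m"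
  then have x: "\<forall>i. dside k * (m$i + (-1) powi k * \<omega>$i) \<le> x$i \<and> x$i < dside k * (m$i + (-1) powi k * \<omega>$i) + dside k"
    unfolding dcube_def hcube_def dcorner_def dside_def by simp
  show "x \<in> dil_cube c (dcorner 0 k (\<chi> i. m$i + \<lfloor>(-1) powi k * \<omega>$i\<rfloor>)) (dside k)"
  proof -
    have "dside k * (real_of_int (m$i + \<lfloor>(-1::real) powi k * \<omega>$i\<rfloor>)) + dside k / 2 - c * dside k / 2 \<le> x$i \<and>
          x$i < dside k * (real_of_int (m$i + \<lfloor>(-1::real) powi k * \<omega>$i\<rfloor>)) + dside k / 2 - c * dside k / 2 + c * dside k" for i
      using coord_B[OF dside_pos assms, where f="\<lfloor>(-1::real) powi k * \<omega>$i\<rfloor>" and t="(-1::real) powi k * \<omega>$i" and m="m$i" and x="x$i"] x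
      by simp
    then show ?thesis unfolding dil_dyadic hcube_def by simp
  qed
qed

lemma dside_shift: "dside (k0 - int j) = 2 ^ j * dside k0"
  unfolding dside_def by (simp add: powr_add[symmetric] powr_realpow[symmetric])

lemma dcorner_eq: "dcorner \<omega> k m $ i = dside k * (m$i + (-1) powi k * \<omega>$i)"
  unfolding dcorner_def dside_def by simp

lemma hcube_corner: "0 < l \<Longrightarrow> a \<in> hcube a l" unfolding hcube_def by simp

lemma dil_in_shifted:
  fixes m :: "int^'n"
  assumes c: "0 < c" "3 * c \<le> 2 ^ j"
  shows "\<exists>\<omega>\<in>Omega. \<exists>m'. dil_cube c (dcorner 0 k0 m) (dside k0) \<subseteq> dcube \<omega> (k0 - int j) m'"
proof -
  define s0 where "s0 = dside k0"
  define s where "s = dside (k0 - int j)"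
  define \<sigma> :: real where "\<sigma> = (-1) powi (k0 - int j)"
  define a where "a = (\<chi> i. s0 * real_of_int (m$i) + s0 / 2 - c * s0 / 2)"
  have s0: "0 < s0" unfolding s0_def by (rule dside_pos)
  have ss: "s = 2 ^ j * s0" unfolding s_def s0_def by (rule dside_shift)
  have s: "0 < s" using s0 ss by simp
  have lam: "c * s0 / s \<le> 1/3" using ss s0 c by (simp add: field_simps)
  have sgn: "\<sigma> = 1 \<or> \<sigma> = -1" unfolding \<sigma>_def by (rule sign_pm)
  have "\<forall>i. \<exists>w m'. w \<in> {0, 1/3, 2/3} \<and> s * (real_of_int m' + \<sigma> * w) \<le> a$i \<and> a$i + c * s0 \<le> s * (real_of_int m' + \<sigma> * w) + s"
  proof
    fix i
    obtain w where w: "w \<in> {0, 1/3, 2/3}" and ex: "\<exists>m'::int. real_of_int m' + \<sigma> * w \<le> a$i / s \<and> a$i / s + c * s0 / s \<le> real_of_int m' + \<sigma> * w + 1"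
      using one_third[OF lam sgn, where y="a$i / s"] by (rule bexE)
    from ex obtain m' :: int where hh: "real_of_int m' + \<sigma> * w \<le> a$i / s \<and> a$i / s + c * s0 / s \<le> real_of_int m' + \<sigma> * w + 1"
      by (rule exE)
    have h1: "real_of_int m' + \<sigma> * w \<le> a$i / s" using hh by (rule conjunct1)
    have h2: "a$i / s + c * s0 / s \<le> real_of_int m' + \<sigma> * w + 1" using hh by (rule conjunct2)
    have "s * (real_of_int m' + \<sigma> * w) \<le> s * (a$i / s)" using h1 s by (intro mult_left_mono) auto
    then have A: "s * (real_of_int m' + \<sigma> * w) \<le> a$i" using s by simp
    have "s * (a$i / s + c * s0 / s) \<le> s * (real_of_int m' + \<sigma> * w + 1)" using h2 s by (intro mult_left_mono) auto
    then have "s * (a$i / s) + s * (c * s0 / s) \<le> s * (real_of_int m' + \<sigma> * w) + s" by (simp only: distrib_left mult_1_right)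
    then have B: "a$i + c * s0 \<le> s * (real_of_int m' + \<sigma> * w) + s" using s by simp
    from A B show "\<exists>w m'. w \<in> {0, 1/3, 2/3} \<and> s * (real_of_int m' + \<sigma> * w) \<le> a$i \<and> a$i + c * s0 \<le> s * (real_of_int m' + \<sigma> * w) + s"
      using w by blast
  qed
  then obtain W M where WM: "\<And>i. W i \<in> {0, 1/3, 2/3} \<and> s * (real_of_int (M i) + \<sigma> * W i) \<le> a$i \<and> a$i + c * s0 \<le> s * (real_of_int (M i) + \<sigma> * W i) + s"
    by metis
  define \<omega> :: "real^'n" where "\<omega> = (\<chi> i. W i)"
  define m' :: "int^'n" where "m' = (\<chi> i. M i)"
  have om: "\<omega> \<in> Omega" unfolding Omega_def \<omega>_def using WM by simp
  have "dil_cube c (dcorner 0 k0 m) (dside k0) \<subseteq> dcube \<omega> (k0 - int j) m'"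
  proof
    fix x assume "x \<in> dil_cube c (dcorner 0 k0 m) (dside k0)"
    then have x: "\<forall>i. a$i \<le> x$i \<and> x$i < a$i + c * s0"
      unfolding dil_dyadic hcube_def a_def s0_def by simp
    show "x \<in> dcube \<omega> (k0 - int j) m'"
      unfolding dcube_def hcube_def
    proof (clarify)
      fix i
      have dc: "dcorner \<omega> (k0 - int j) m' $ i = s * (real_of_int (M i) + \<sigma> * W i)"
        unfolding dcorner_eq s_def \<sigma>_def \<omega>_def m'_def by simp
      have ds: "dside (k0 - int j) = s" unfolding s_def ..
      have xi: "a$i \<le> x$i \<and> x$i < a$i + c * s0" using x by blast
      show "dcorner \<omega> (k0 - int j) m' $ i \<le> x $ i \<and> x $ i < dcorner \<omega> (k0 - int j) m' $ i + dside (k0 - int j)"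
        unfolding dc ds using WM[of i] xi by linarith
    qed
  qed
  then show ?thesis using om by blast
qed

lemma dil_inj:
  fixes m1 m2 m' :: "int^'n"
  assumes c: "0 < c"
    and h1: "dil_cube c (dcorner 0 k0 m1) (dside k0) \<subseteq> dcube \<omega> (k0 - int j) m'"
    and h2: "dil_cube c (dcorner 0 k0 m2) (dside k0) \<subseteq> dcube \<omega> (k0 - int j) m'"
    and md: "\<forall>i. m1$i mod 2^j = m2$i mod 2^j"
  shows "m1 = m2"
proof -
  define s0 where "s0 = dside k0"
  define s where "s = dside (k0 - int j)"
  have s0: "0 < s0" unfolding s0_def by (rule dside_pos)
  have ss: "s = 2 ^ j * s0" unfolding s_def s0_def by (rule dside_shift)
  have bnd: "e \<le> s0 * real_of_int (mm$i) + s0 / 2 - c * s0 / 2 \<and> s0 * real_of_int (mm$i) + s0 / 2 - c * s0 / 2 < e + s"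
    if h: "dil_cube c (dcorner 0 k0 mm) (dside k0) \<subseteq> dcube \<omega> (k0 - int j) m'"
      and e: "e = dcorner \<omega> (k0 - int j) m' $ i" for mm :: "int^'n" and e i
  proof -
    have "(\<chi> i. s0 * real_of_int (mm$i) + s0 / 2 - c * s0 / 2) \<in> dil_cube c (dcorner 0 k0 mm) (dside k0)"
      unfolding dil_dyadic s0_def using c dside_pos[of k0] by (intro hcube_corner) simp
    then have "(\<chi> i. s0 * real_of_int (mm$i) + s0 / 2 - c * s0 / 2) \<in> dcube \<omega> (k0 - int j) m'" using h by blast
    then show ?thesis unfolding dcube_def hcube_def e s_def by simp
  qed
  have "m1$i = m2$i" for i
  proof -
    define e where "e = dcorner \<omega> (k0 - int j) m' $ i"
    define x where "x = (e - s0 / 2 + c * s0 / 2) / s0"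
    have iv: "x \<le> real_of_int (mm$i) \<and> real_of_int (mm$i) < x + real_of_int (2 ^ j)"
      if "e \<le> s0 * real_of_int (mm$i) + s0 / 2 - c * s0 / 2 \<and> s0 * real_of_int (mm$i) + s0 / 2 - c * s0 / 2 < e + s"
      for mm :: "int^'n"
    proof -
      have "e - s0 / 2 + c * s0 / 2 \<le> s0 * real_of_int (mm$i)" using that by linarith
      then have A: "x \<le> real_of_int (mm$i)" unfolding x_def using s0 by (simp add: divide_le_eq mult.commute)
      have "s0 * real_of_int (mm$i) < e - s0 / 2 + c * s0 / 2 + 2 ^ j * s0" using that ss by linarith
      then have "real_of_int (mm$i) < (e - s0 / 2 + c * s0 / 2 + 2 ^ j * s0) / s0" using s0
        by (simp add: less_divide_eq mult.commute)
      also have "\<dots> = x + 2 ^ j" unfolding x_def using s0 by (simp add: field_simps)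
      finally show ?thesis using A by simp
    qed
    show ?thesis
      using int_interval_cong[of x "m1$i" "2^j" "m2$i"] iv[of m1] iv[of m2] bnd[OF h1 e_def] bnd[OF h2 e_def] md
      by simp
  qed
  then show ?thesis by (simp add: vec_eq_iff)
qed

lemma osc_compare:
  fixes w b :: "real^'n \<Rightarrow> real"
  assumes A: "A2 w" and C: "\<forall>a l. 0 < l \<longrightarrow> avg w (hcube a l) * avg (\<lambda>x. 1 / w x) (hcube a l) \<le> C"
    and l: "0 < l" "0 < l'" and QP: "hcube a l \<subseteq> hcube a' l'" and lb: "loc_int b"
  shows "osc w b (hcube a l) \<le> 2 * C * (l' ^ CARD('n) / l ^ CARD('n))^2 * osc w b (hcube a' l')"
proof -
  define Q where "Q = hcube a l"
  define P where "P = hcube a' l'"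
  define K where "K = C * (l' ^ CARD('n) / l ^ CARD('n))^2"
  define IQ where "IQ = (LINT x:Q|lebesgue. \<bar>b x - avg b Q\<bar>)"
  define IP where "IP = (LINT x:P|lebesgue. \<bar>b x - avg b P\<bar>)"
  have nQ: "0 < wmeas w Q" using doubling(1)[OF A C l QP] unfolding Q_def .
  have nP: "0 < wmeas w P" using doubling(1)[OF A C l(2) l(2) order_refl] unfolding P_def .
  have nPQ: "wmeas w P \<le> K * wmeas w Q" using doubling(2)[OF A C l QP] unfolding P_def Q_def K_def .
  have IP0: "0 \<le> IP" unfolding IP_def set_lebesgue_integral_def
    by (intro Bochner_Integration.integral_nonneg) (auto split: split_indicator)
  have "IQ \<le> 2 * IP"
    unfolding IQ_def IP_def avg_def[of b Q]
  proof (rule osc_core)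
    show "Q \<in> sets lebesgue" "P \<in> sets lebesgue" unfolding Q_def P_def by simp_all
    show "emeasure lebesgue Q < \<infinity>" "emeasure lebesgue P < \<infinity>" unfolding Q_def P_def
      by (rule hcube_emeasure_finite)+
    show "0 < measure lebesgue Q" unfolding Q_def using hcube_measure[OF l(1), of a] l(1) by simp
    show "Q \<subseteq> P" unfolding Q_def P_def by (rule QP)
    show "set_integrable lebesgue P b" unfolding P_def by (rule loc_int_hcube[OF lb])
  qed
  then have "IQ / wmeas w Q \<le> 2 * IP / wmeas w Q" using nQ by (simp add: divide_right_mono)
  also have "\<dots> \<le> 2 * K * (IP / wmeas w P)"
  proof -
    have "2 * IP * wmeas w P \<le> 2 * IP * (K * wmeas w Q)" using nPQ IP0 by (intro mult_left_mono) auto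
    then show ?thesis using nP nQ by (simp add: field_simps)
  qed
  finally show ?thesis unfolding osc_def IQ_def IP_def K_def Q_def P_def by (simp add: mult.assoc)
qed

lemma cs_ind: "(\<integral>\<^sup>+x. f x \<partial>count_space X) = (\<integral>\<^sup>+x. f x * indicator X x \<partial>count_space UNIV)"
  by (simp add: nn_integral_restrict_space[symmetric] restrict_count_space)

lemma nn_reindex_le:
  fixes F :: "'b \<Rightarrow> ennreal"
  assumes "inj_on g A"
  shows "(\<integral>\<^sup>+x. F (g x) * indicator A x \<partial>count_space UNIV) \<le> (\<integral>\<^sup>+y. F y \<partial>count_space UNIV)"
proof -
  have "(\<integral>\<^sup>+x. F (g x) * indicator A x \<partial>count_space UNIV) = (\<integral>\<^sup>+x. F (g x) \<partial>count_space A)"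
    by (rule cs_ind[symmetric])
  also have "\<dots> = (\<integral>\<^sup>+y. F y \<partial>count_space (g ` A))"
    by (rule nn_integral_bij_count_space) (use assms in \<open>simp add: inj_on_imp_bij_betw\<close>)
  also have "\<dots> = (\<integral>\<^sup>+y. F y * indicator (g ` A) y \<partial>count_space UNIV)" by (rule cs_ind)
  also have "\<dots> \<le> (\<integral>\<^sup>+y. F y \<partial>count_space UNIV)"
    by (intro nn_integral_mono) (auto split: split_indicator)
  finally show ?thesis .
qed

lemma nn_split_bound:
  fixes F :: "'a \<Rightarrow> ennreal" and G :: "'w \<Rightarrow> 'b \<Rightarrow> ennreal"
    and cls :: "'a \<Rightarrow> 'w \<times> 'r" and tgt :: "'a \<Rightarrow> 'b"
  assumes S: "finite S" "\<And>x. cls x \<in> S" and inj: "\<And>z. inj_on tgt {x. cls x = z}"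
    and FG: "\<And>x. F x \<le> G (fst (cls x)) (tgt x)"
  shows "(\<integral>\<^sup>+x. F x \<partial>count_space UNIV) \<le> (\<Sum>z\<in>S. \<integral>\<^sup>+y. G (fst z) y \<partial>count_space UNIV)"
proof -
  have "(\<integral>\<^sup>+x. F x \<partial>count_space UNIV) \<le> (\<integral>\<^sup>+x. (\<Sum>z\<in>S. G (fst z) (tgt x) * indicator {x. cls x = z} x) \<partial>count_space UNIV)"
  proof (intro nn_integral_mono)
    fix x
    have "G (fst (cls x)) (tgt x) * indicator {y. cls y = cls x} x \<le> (\<Sum>z\<in>S. G (fst z) (tgt x) * indicator {x. cls x = z} x)"
      by (rule member_le_sum[where f="\<lambda>z. G (fst z) (tgt x) * indicator {x. cls x = z} x", OF S(2) _ S(1)]) simp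
    then show "F x \<le> (\<Sum>z\<in>S. G (fst z) (tgt x) * indicator {x. cls x = z} x)"
      using FG[of x] by (simp add: indicator_def)
  qed
  also have "\<dots> = (\<Sum>z\<in>S. \<integral>\<^sup>+x. G (fst z) (tgt x) * indicator {x. cls x = z} x \<partial>count_space UNIV)"
    by (rule nn_integral_sum) simp
  also have "\<dots> \<le> (\<Sum>z\<in>S. \<integral>\<^sup>+y. G (fst z) y \<partial>count_space UNIV)"
    by (intro sum_mono nn_reindex_le inj)
  finally show ?thesis .
qed

lemma finite_vecs:
  assumes "finite T"
  shows "finite {v :: 'a^'n. \<forall>i. v$i \<in> T}"
proof -
  have "{v :: 'a^'n. \<forall>i. v$i \<in> T} \<subseteq> (\<lambda>f. vec_lambda f) ` (PiE UNIV (\<lambda>_. T))"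
  proof
    fix v :: "'a^'n" assume "v \<in> {v. \<forall>i. v$i \<in> T}"
    then have "(\<lambda>i. v$i) \<in> PiE UNIV (\<lambda>_. T)" by auto
    moreover have "v = vec_lambda (\<lambda>i. v$i)" by simp
    ultimately show "v \<in> (\<lambda>f. vec_lambda f) ` (PiE UNIV (\<lambda>_. T))" by blast
  qed
  moreover have "finite (PiE (UNIV::'n set) (\<lambda>_. T))" using assms by (intro finite_PiE) auto
  ultimately show ?thesis by (meson finite_imageI finite_subset)
qed

lemma finite_Omega: "finite (Omega :: (real^'n) set)"
  unfolding Omega_def by (rule finite_vecs) simp

lemma zero_Omega: "0 \<in> Omega" unfolding Omega_def by simp

lemma osc_nonneg:
  assumes "A2 w"
  shows "0 \<le> osc w b E"
proof -
  have "0 \<le> wmeas w E" using assms unfolding wmeas_def set_lebesgue_integral_def A2_def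
    by (intro Bochner_Integration.integral_nonneg) (auto split: split_indicator)
  moreover have "0 \<le> (LINT x:E|lebesgue. \<bar>b x - avg b E\<bar>)" unfolding set_lebesgue_integral_def
    by (intro Bochner_Integration.integral_nonneg) (auto split: split_indicator)
  ultimately show ?thesis unfolding osc_def by simp
qed

lemma powr_step:
  fixes u v K p :: real
  assumes "0 \<le> u" "u \<le> K * v" "0 \<le> v" "0 \<le> K" "0 < p"
  shows "ennreal (u powr p) \<le> ennreal (K powr p) * ennreal (v powr p)"
proof -
  have "u powr p \<le> (K * v) powr p" using assms by (intro powr_mono2) auto
  also have "\<dots> = K powr p * v powr p" using assms by (simp add: powr_mult)
  finally show ?thesis by (simp add: ennreal_mult[symmetric])
qed

lemma partB:
  fixes \<nu> b :: "real^'n \<Rightarrow> real" and \<omega> :: "real^'n"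
  assumes A: "A2 \<nu>" and C: "\<forall>a l. 0 < l \<longrightarrow> avg \<nu> (hcube a l) * avg (\<lambda>x. 1 / \<nu> x) (hcube a l) \<le> C"
    and C1: "0 \<le> C" and lb: "loc_int b" and p: "0 < p" and c3: "3 \<le> c"
  shows "besovD_pow \<nu> p \<omega> b \<le> ennreal ((2 * C * (c ^ CARD('n))^2) powr p) *
     (\<integral>\<^sup>+ km. ennreal (osc \<nu> b (dil_cube c (dcorner 0 (fst km) (snd km)) (dside (fst km))) powr p) \<partial>count_space UNIV)"
proof -
  define K1 where "K1 = 2 * C * (c ^ CARD('n))^2"
  define F where "F = (\<lambda>km :: int \<times> (int^'n). ennreal (osc \<nu> b (dil_cube c (dcorner 0 (fst km) (snd km)) (dside (fst km))) powr p))"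
  define g where "g = (\<lambda>km :: int \<times> (int^'n). (fst km, \<chi> i. (snd km)$i + \<lfloor>(-1::real) powi (fst km) * \<omega>$i\<rfloor>))"
  have K1: "0 \<le> K1" unfolding K1_def using C1 by simp
  have inj: "inj_on g UNIV"
  proof (rule inj_onI)
    fix x y assume "g x = g y"
    then have "fst x = fst y" and "\<forall>i. (snd x)$i + \<lfloor>(-1::real) powi (fst x) * \<omega>$i\<rfloor> = (snd y)$i + \<lfloor>(-1::real) powi (fst y) * \<omega>$i\<rfloor>"
      unfolding g_def by (auto simp: vec_eq_iff)
    then have "fst x = fst y" "snd x = snd y" by (auto simp: vec_eq_iff)
    then show "x = y" by (simp add: prod_eq_iff)
  qed
  have pt: "ennreal (osc \<nu> b (dcube \<omega> (fst km) (snd km)) powr p) \<le> ennreal (K1 powr p) * F (g km)" for km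
  proof -
    obtain k m where km: "km = (k, m)" by (cases km)
    define s where "s = dside k"
    have s: "0 < s" unfolding s_def by (rule dside_pos)
    define m'' where "m'' = (\<chi> i. m$i + \<lfloor>(-1::real) powi k * \<omega>$i\<rfloor>)"
    have QP: "hcube (dcorner \<omega> k m) s \<subseteq> hcube (\<chi> i. dcorner 0 k m'' $ i + s / 2 - c * s / 2) (c * s)"
      using dcube_in_dil[OF c3, of \<omega> k m] unfolding dcube_def dil_cube_def m''_def s_def .
    have "osc \<nu> b (hcube (dcorner \<omega> k m) s) \<le> 2 * C * ((c * s) ^ CARD('n) / s ^ CARD('n))^2 * osc \<nu> b (hcube (\<chi> i. dcorner 0 k m'' $ i + s / 2 - c * s / 2) (c * s))"
      using osc_compare[OF A C s _ QP lb] s c3 by simp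
    also have "(c * s) ^ CARD('n) / s ^ CARD('n) = c ^ CARD('n)" using s by (simp add: power_mult_distrib)
    finally have "osc \<nu> b (dcube \<omega> k m) \<le> K1 * osc \<nu> b (dil_cube c (dcorner 0 k m'') (dside k))"
      unfolding K1_def dcube_def dil_cube_def s_def .
    then show ?thesis unfolding km F_def g_def m''_def
      using powr_step[OF osc_nonneg[OF A] _ osc_nonneg[OF A] K1 p] by simp
  qed
  have "besovD_pow \<nu> p \<omega> b \<le> (\<integral>\<^sup>+ km. ennreal (K1 powr p) * F (g km) \<partial>count_space UNIV)"
    unfolding besovD_pow_def by (intro nn_integral_mono pt)
  also have "\<dots> = ennreal (K1 powr p) * (\<integral>\<^sup>+ km. F (g km) \<partial>count_space UNIV)"
    by (rule nn_integral_cmult) simp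
  also have "\<dots> \<le> ennreal (K1 powr p) * (\<integral>\<^sup>+ km. F km \<partial>count_space UNIV)"
    using nn_reindex_le[OF inj, of F] by (intro mult_left_mono) auto
  finally show ?thesis unfolding K1_def F_def .
qed

lemma partA:
  fixes \<nu> b :: "real^'n \<Rightarrow> real"
  assumes A: "A2 \<nu>" and C: "\<forall>a l. 0 < l \<longrightarrow> avg \<nu> (hcube a l) * avg (\<lambda>x. 1 / \<nu> x) (hcube a l) \<le> C"
    and C1: "0 \<le> C" and lb: "loc_int b" and p: "0 < p" and c0: "0 < c" and cj: "3 * c \<le> 2 ^ j"
  shows "(\<integral>\<^sup>+ km. ennreal (osc \<nu> b (dil_cube c (dcorner 0 (fst km) (snd km)) (dside (fst km))) powr p) \<partial>count_space UNIV)
     \<le> ennreal ((2 * C * ((2 ^ j / c) ^ CARD('n))^2) powr p * real (card {r :: int^'n. \<forall>i. r$i \<in> {0..<2^j}}))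
        * (\<Sum>\<omega>\<in>Omega. besovD_pow \<nu> p \<omega> b)"
proof -
  define K2 where "K2 = 2 * C * ((2 ^ j / c) ^ CARD('n))^2"
  define R where "R = {r :: int^'n. \<forall>i. r$i \<in> {0..<2^j}}"
  define dil where "dil = (\<lambda>km :: int \<times> (int^'n). dil_cube c (dcorner 0 (fst km) (snd km)) (dside (fst km)))"
  define F where "F = (\<lambda>km :: int \<times> (int^'n). ennreal (osc \<nu> b (dil km) powr p))"
  define G where "G = (\<lambda>\<omega> (y :: int \<times> (int^'n)). ennreal (K2 powr p) * ennreal (osc \<nu> b (dcube \<omega> (fst y) (snd y)) powr p))"
  have K2: "0 \<le> K2" unfolding K2_def using C1 by simp
  have ex: "\<exists>z. fst z \<in> Omega \<and> dil km \<subseteq> dcube (fst z) (fst km - int j) (snd z)" for km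
    using dil_in_shifted[OF c0 cj, of "fst km" "snd km"] unfolding dil_def by auto
  define sel where "sel = (\<lambda>km. SOME z. fst z \<in> Omega \<and> dil km \<subseteq> dcube (fst z) (fst km - int j) (snd z))"
  have sel: "fst (sel km) \<in> Omega \<and> dil km \<subseteq> dcube (fst (sel km)) (fst km - int j) (snd (sel km))" for km
    unfolding sel_def by (rule someI_ex[OF ex])
  define cls where "cls = (\<lambda>km :: int \<times> (int^'n). (fst (sel km), \<chi> i. (snd km)$i mod 2^j))"
  define tgt where "tgt = (\<lambda>km :: int \<times> (int^'n). (fst km - int j, snd (sel km)))"
  have finR: "finite R" unfolding R_def by (rule finite_vecs) simp
  have finS: "finite ((Omega :: (real^'n) set) \<times> R)" by (rule finite_cartesian_product[OF finite_Omega finR])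
  have clsS: "cls x \<in> Omega \<times> R" for x
    using sel[of x] unfolding cls_def R_def by auto
  have inj: "inj_on tgt {x. cls x = z}" for z
  proof (rule inj_onI)
    fix x y assume x: "x \<in> {x. cls x = z}" and y: "y \<in> {x. cls x = z}" and t: "tgt x = tgt y"
    have f: "fst x = fst y" using t unfolding tgt_def by simp
    have s2: "snd (sel x) = snd (sel y)" using t unfolding tgt_def by simp
    have s1: "fst (sel x) = fst (sel y)" using x y unfolding cls_def by auto
    have "(\<chi> i. (snd x)$i mod 2^j) = (\<chi> i. (snd y)$i mod 2^j)" using x y unfolding cls_def by auto
    then have md: "\<forall>i. (snd x)$i mod 2^j = (snd y)$i mod 2^j" by (simp add: vec_eq_iff)
    have h1: "dil_cube c (dcorner 0 (fst x) (snd x)) (dside (fst x)) \<subseteq> dcube (fst (sel x)) (fst x - int j) (snd (sel x))"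
      using sel[of x] unfolding dil_def by simp
    have h2: "dil_cube c (dcorner 0 (fst x) (snd y)) (dside (fst x)) \<subseteq> dcube (fst (sel x)) (fst x - int j) (snd (sel x))"
      using sel[of y] unfolding dil_def f s1 s2 by simp
    have "snd x = snd y" by (rule dil_inj[OF c0 h1 h2 md])
    then show "x = y" using f by (simp add: prod_eq_iff)
  qed
  have FG: "F x \<le> G (fst (cls x)) (tgt x)" for x
  proof -
    obtain k0 m where x: "x = (k0, m)" by (cases x)
    define s0 where "s0 = dside k0"
    have s0: "0 < s0" unfolding s0_def by (rule dside_pos)
    define \<omega> where "\<omega> = fst (sel x)"
    define m' where "m' = snd (sel x)"
    have QP: "hcube (\<chi> i. dcorner 0 k0 m $ i + s0 / 2 - c * s0 / 2) (c * s0) \<subseteq> hcube (dcorner \<omega> (k0 - int j) m') (dside (k0 - int j))"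
      using sel[of x] unfolding dil_def x dil_cube_def dcube_def \<omega>_def m'_def s0_def by (simp add: x)
    have "osc \<nu> b (hcube (\<chi> i. dcorner 0 k0 m $ i + s0 / 2 - c * s0 / 2) (c * s0)) \<le>
      2 * C * ((dside (k0 - int j)) ^ CARD('n) / (c * s0) ^ CARD('n))^2 * osc \<nu> b (hcube (dcorner \<omega> (k0 - int j) m') (dside (k0 - int j)))"
      using osc_compare[OF A C _ dside_pos QP lb] s0 c0 by simp
    also have "(dside (k0 - int j)) ^ CARD('n) / (c * s0) ^ CARD('n) = (2 ^ j / c) ^ CARD('n)"
    proof -
      have "(dside (k0 - int j)) ^ CARD('n) / (c * s0) ^ CARD('n) = (2 ^ j * s0 / (c * s0)) ^ CARD('n)"
        unfolding dside_shift s0_def by (rule power_divide[symmetric])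
      also have "2 ^ j * s0 / (c * s0) = 2 ^ j / c" using s0 by simp
      finally show ?thesis .
    qed
    finally have "osc \<nu> b (dil x) \<le> K2 * osc \<nu> b (dcube \<omega> (k0 - int j) m')"
      unfolding K2_def dil_def dcube_def x dil_cube_def s0_def by simp
    then show ?thesis unfolding F_def G_def cls_def tgt_def \<omega>_def m'_def x
      using powr_step[OF osc_nonneg[OF A] _ osc_nonneg[OF A] K2 p] by (simp add: x)
  qed
  have "(\<integral>\<^sup>+ km. F km \<partial>count_space UNIV) \<le> (\<Sum>z\<in>Omega \<times> R. \<integral>\<^sup>+y. G (fst z) y \<partial>count_space UNIV)"
    by (rule nn_split_bound[where S="Omega \<times> R" and cls=cls and tgt=tgt and F=F and G=G, OF finS clsS inj FG])
  also have "\<dots> = (\<Sum>z\<in>Omega \<times> R. ennreal (K2 powr p) * besovD_pow \<nu> p (fst z) b)"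
    unfolding G_def besovD_pow_def by (intro sum.cong refl nn_integral_cmult) simp
  also have "\<dots> = (\<Sum>\<omega>\<in>Omega. \<Sum>r\<in>R. ennreal (K2 powr p) * besovD_pow \<nu> p \<omega> b)"
    by (subst sum.cartesian_product) (simp add: case_prod_beta)
  also have "\<dots> = (\<Sum>\<omega>\<in>Omega. of_nat (card R) * (ennreal (K2 powr p) * besovD_pow \<nu> p \<omega> b))"
    by simp
  also have "\<dots> = ennreal (K2 powr p * real (card R)) * (\<Sum>\<omega>\<in>Omega. besovD_pow \<nu> p \<omega> b)"
    by (simp add: sum_distrib_left ennreal_mult ennreal_of_nat_eq_real_of_nat mult_ac)
  finally show ?thesis unfolding F_def dil_def K2_def R_def .
qed

theorem theorem3p4:
  fixes \<nu> :: "real^'n \<Rightarrow> real" and p :: real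
  assumes "A2 \<nu>" and "0 < p"
  shows "Besov \<nu> p = (\<Inter>\<omega>\<in>(Omega :: (real^'n) set). BesovD \<nu> p \<omega>) \<and>
    (\<exists>C>0. \<forall>b \<in> Besov \<nu> p.
        besov_norm \<nu> p b \<le> C * (\<Sum>\<omega>\<in>Omega. besovD_norm \<nu> p \<omega> b) \<and>
        (\<Sum>\<omega>\<in>Omega. besovD_norm \<nu> p \<omega> b) \<le> C * besov_norm \<nu> p b)"
proof -
  define c where "c = 20 * sqrt (real CARD('n))"
  have "1 \<le> real CARD('n)" using finite_UNIV_card_ge_0[where 'a='n] by simp
  then have "1 \<le> sqrt (real CARD('n))" by simp
  then have c3: "3 \<le> c" unfolding c_def by linarith
  then have c0: "0 < c" by simp
  obtain C0 where C0: "\<forall>a l. 0 < l \<longrightarrow> avg \<nu> (hcube a l) * avg (\<lambda>x. 1 / \<nu> x) (hcube a l) \<le> C0"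
    using assms(1) unfolding A2_def by blast
  define C where "C = max C0 1"
  have C: "\<forall>a l. 0 < l \<longrightarrow> avg \<nu> (hcube a l) * avg (\<lambda>x. 1 / \<nu> x) (hcube a l) \<le> C"
    using C0 unfolding C_def by (meson max.coboundedI1)
  have C1: "1 \<le> C" unfolding C_def by simp
  obtain j :: nat where "3 * c < 2 ^ j" using real_arch_pow[of 2 "3 * c"] by auto
  then have cj: "3 * c \<le> 2 ^ j" by simp
  define K1 where "K1 = 2 * C * (c ^ CARD('n))^2"
  define M2 where "M2 = (2 * C * ((2 ^ j / c) ^ CARD('n))^2) powr p * real (card {r :: int^'n. \<forall>i. r$i \<in> {0..<2^j}})"
  have K1: "0 < K1" unfolding K1_def using C1 c0 by simp
  have M2: "0 \<le> M2" unfolding M2_def by simp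
  have PB: "besovD_pow \<nu> p \<omega> b \<le> ennreal (K1 powr p) * besov_pow \<nu> p b" if "loc_int b" for \<omega> b
    using partB[OF assms(1) C _ that assms(2) c3, of \<omega>] C1 unfolding besov_pow_def K1_def c_def by simp
  have PA: "besov_pow \<nu> p b \<le> ennreal M2 * (\<Sum>\<omega>\<in>Omega. besovD_pow \<nu> p \<omega> b)" if "loc_int b" for b
    using partA[OF assms(1) C _ that assms(2) c0 cj] C1 unfolding besov_pow_def M2_def c_def by simp
  have eq: "Besov \<nu> p = (\<Inter>\<omega>\<in>(Omega :: (real^'n) set). BesovD \<nu> p \<omega>)"
  proof (intro equalityI subsetI)
    fix b assume "b \<in> Besov \<nu> p"
    then have lb: "loc_int b" and X: "besov_pow \<nu> p b < \<infinity>" unfolding Besov_def by auto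
    have "besovD_pow \<nu> p \<omega> b < \<infinity>" for \<omega>
    proof -
      have "ennreal (K1 powr p) * besov_pow \<nu> p b < \<infinity>" using X by (simp add: ennreal_mult_less_top)
      then show ?thesis using PB[OF lb, of \<omega>] by (rule le_less_trans[rotated])
    qed
    then show "b \<in> (\<Inter>\<omega>\<in>(Omega :: (real^'n) set). BesovD \<nu> p \<omega>)" using lb unfolding BesovD_def by auto
  next
    fix b assume b: "b \<in> (\<Inter>\<omega>\<in>(Omega :: (real^'n) set). BesovD \<nu> p \<omega>)"
    then have lb: "loc_int b" using zero_Omega unfolding BesovD_def by auto
    have "\<forall>\<omega>\<in>(Omega :: (real^'n) set). besovD_pow \<nu> p \<omega> b < \<infinity>" using b unfolding BesovD_def by auto
    then have "(\<Sum>\<omega>\<in>(Omega :: (real^'n) set). besovD_pow \<nu> p \<omega> b) < \<infinity>" by (simp add: ennreal_sum_less_top[OF finite_Omega])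
    then have "ennreal M2 * (\<Sum>\<omega>\<in>(Omega :: (real^'n) set). besovD_pow \<nu> p \<omega> b) < \<infinity>"
      by (simp add: ennreal_mult_less_top)
    then have "besov_pow \<nu> p b < \<infinity>" using PA[OF lb] by (rule le_less_trans[rotated])
    then show "b \<in> Besov \<nu> p" using lb unfolding Besov_def by auto
  qed
  define NO where "NO = real (card (Omega :: (real^'n) set))"
  have NO: "1 \<le> NO" unfolding NO_def using finite_Omega zero_Omega
    by (metis One_nat_def Suc_leI card_gt_0_iff empty_iff of_nat_1 of_nat_le_iff)
  define Cf where "Cf = max (M2 powr (1/p) * NO powr (1/p)) (NO * K1)"
  have Cf: "0 < Cf" unfolding Cf_def using NO K1 by (simp add: less_max_iff_disj)
  have "\<forall>b \<in> Besov \<nu> p.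
        besov_norm \<nu> p b \<le> Cf * (\<Sum>\<omega>\<in>Omega. besovD_norm \<nu> p \<omega> b) \<and>
        (\<Sum>\<omega>\<in>Omega. besovD_norm \<nu> p \<omega> b) \<le> Cf * besov_norm \<nu> p b"
  proof
    fix b assume bB: "b \<in> Besov \<nu> p"
    then have lb: "loc_int b" and X: "besov_pow \<nu> p b < \<infinity>" unfolding Besov_def by auto
    have Y: "besovD_pow \<nu> p \<omega> b < \<infinity>" if "\<omega> \<in> Omega" for \<omega>
      using bB that unfolding eq BesovD_def by auto
    define x where "x = enn2real (besov_pow \<nu> p b)"
    define y where "y = (\<lambda>\<omega>. enn2real (besovD_pow \<nu> p \<omega> b))"
    have x0: "0 \<le> x" and y0: "\<And>\<omega>. 0 \<le> y \<omega>" unfolding x_def y_def by auto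
    have Xe: "besov_pow \<nu> p b = ennreal x" unfolding x_def using X by simp
    have Ye: "besovD_pow \<nu> p \<omega> b = ennreal (y \<omega>)" if "\<omega> \<in> Omega" for \<omega>
      unfolding y_def using Y[OF that] by simp
    have hy: "y \<omega> \<le> K1 powr p * x" if "\<omega> \<in> Omega" for \<omega>
    proof -
      have "ennreal (y \<omega>) \<le> ennreal (K1 powr p) * ennreal x" using PB[OF lb, of \<omega>] Xe Ye[OF that] by simp
      also have "\<dots> = ennreal (K1 powr p * x)" using x0 by (simp add: ennreal_mult)
      finally show ?thesis using x0 by simp
    qed
    have hx: "x \<le> M2 * (\<Sum>\<omega>\<in>Omega. y \<omega>)"
    proof -
      have "ennreal x \<le> ennreal M2 * (\<Sum>\<omega>\<in>Omega. ennreal (y \<omega>))" using PA[OF lb] Xe Ye by simp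
      also have "\<dots> = ennreal (M2 * (\<Sum>\<omega>\<in>Omega. y \<omega>))" using y0 M2
        by (simp add: ennreal_mult sum_nonneg)
      finally show ?thesis using y0 M2 by (simp add: sum_nonneg)
    qed
    have bn: "besov_norm \<nu> p b = x powr (1/p)" unfolding besov_norm_def x_def ..
    have bdn: "besovD_norm \<nu> p \<omega> b = y \<omega> powr (1/p)" for \<omega> unfolding besovD_norm_def y_def ..
    define T where "T = (\<Sum>\<omega>\<in>(Omega :: (real^'n) set). y \<omega> powr (1/p))"
    have T0: "0 \<le> T" unfolding T_def by (simp add: sum_nonneg)
    have ineq2: "T \<le> Cf * x powr (1/p)"
    proof -
      have "y \<omega> powr (1/p) \<le> K1 * x powr (1/p)" if "\<omega> \<in> Omega" for \<omega>
      proof -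
        have "y \<omega> powr (1/p) \<le> (K1 powr p * x) powr (1/p)"
          using hy[OF that] y0 assms(2) by (intro powr_mono2) auto
        also have "\<dots> = (K1 powr p) powr (1/p) * x powr (1/p)" by (simp add: powr_mult)
        also have "(K1 powr p) powr (1/p) = K1" using K1 assms(2) by (simp add: powr_powr)
        finally show ?thesis .
      qed
      then have "T \<le> (\<Sum>\<omega>\<in>(Omega :: (real^'n) set). K1 * x powr (1/p))" unfolding T_def by (rule sum_mono)
      also have "\<dots> = NO * K1 * x powr (1/p)" unfolding NO_def by simp
      also have "\<dots> \<le> Cf * x powr (1/p)" unfolding Cf_def by (intro mult_right_mono) auto
      finally show ?thesis .
    qed
    have ineq1: "x powr (1/p) \<le> Cf * T"
    proof -
      have "y \<omega> \<le> T powr p" if "\<omega> \<in> Omega" for \<omega>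
      proof -
        have "y \<omega> powr (1/p) \<le> T" unfolding T_def
          by (rule member_le_sum[OF that _ finite_Omega]) simp
        then have "(y \<omega> powr (1/p)) powr p \<le> T powr p" using assms(2) by (intro powr_mono2) auto
        moreover have "(y \<omega> powr (1/p)) powr p = y \<omega>" using y0[of \<omega>] assms(2) by (simp add: powr_powr)
        ultimately show ?thesis by simp
      qed
      then have "(\<Sum>\<omega>\<in>(Omega :: (real^'n) set). y \<omega>) \<le> NO * T powr p" unfolding NO_def
        using sum_bounded_above[of Omega y "T powr p"] by simp
      then have "x \<le> M2 * (NO * T powr p)" using hx M2 by (meson mult_left_mono order_trans)
      then have "x powr (1/p) \<le> (M2 * (NO * T powr p)) powr (1/p)" using x0 assms(2) by (intro powr_mono2) auto
      also have "\<dots> = M2 powr (1/p) * NO powr (1/p) * (T powr p) powr (1/p)" by (simp add: powr_mult)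
      also have "(T powr p) powr (1/p) = T" using T0 assms(2) by (simp add: powr_powr)
      also have "M2 powr (1/p) * NO powr (1/p) * T \<le> Cf * T" unfolding Cf_def using T0
        by (intro mult_right_mono) auto
      finally show ?thesis .
    qed
    show "besov_norm \<nu> p b \<le> Cf * (\<Sum>\<omega>\<in>Omega. besovD_norm \<nu> p \<omega> b) \<and>
        (\<Sum>\<omega>\<in>Omega. besovD_norm \<nu> p \<omega> b) \<le> Cf * besov_norm \<nu> p b"
      using ineq1 ineq2 unfolding bn bdn T_def by simp
  qed
  then show ?thesis using eq Cf by blast
qed


end
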